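(* Let $\lambda\in\mathcal P_\epsilon(N)$ and let $\mathbf i=(i_1,\dots,i_l)$ be an admissible sequence for $\lambda$; if $\epsilon=1$ assume in addition that $N-2\sum_{j=1}^l i_j\ne2$. Then $(i_{\sigma(1)},\dots,i_{\sigma(l)})$ is an admissible sequence for $\lambda$ for every permutation $\sigma$ of $\{1,\dots,l\}$.
   Context: $\mathcal P_\epsilon(N)$ ($\epsilon=\pm1$) is the set of partitions $\lambda=(\lambda_1\ge\dots\ge\lambda_n\ge1)$ of $N$ in which every part $m$ with $\epsilon(-1)^m=1$ occurs with even multiplicity; conventions $\lambda_0=0$, $\lambda_i=0$ for $i>n$. A 2-step of $\lambda$ is a pair $(i,i+1)$, $1\le i<n$, with $\epsilon(-1)^{\lambda_i}=\epsilon(-1)^{\lambda_{i+1}}=-1$, $\lambda_{i-1}\ne\lambda_i$, $\lambda_{i+1}\ne\lambda_{i+2}$; $\Delta(\lambda)$ is the set of 2-steps. KS algorithm: for $1\le i\le n$, Case 1 occurs at $i$ if $\lambda_i\ge\lambda_{i+1}+2$, and then $\lambda^{(i)}=(\lambda_1-2,\dots,\lambda_i-2,\lambda_{i+1},\dots,\lambda_n)$; Case 2 occurs at $i$ if $(i,i+1)\in\Delta(\lambda)$ and $\lambda_i=\lambda_{i+1}$, and then $\lambda^{(i)}=(\lambda_1-2,\dots,\lambda_{i-1}-2,\lambda_i-1,\lambda_{i+1}-1,\lambda_{i+2},\dots,\lambda_n)$; zero parts discarded, $\lambda^{(i)}\in\mathcal P_\epsilon(N-2i)$. A sequence $(i_1,\dots,i_l)$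 is admissible for $\lambda$ if for each $k$ Case 1 or Case 2 occurs at $i_k$ for $\lambda^{(i_1,\dots,i_{k-1})}$, where $\lambda^\emptyset=\lambda$ and $\lambda^{(i_1,\dots,i_k)}=(\lambda^{(i_1,\dots,i_{k-1})})^{(i_k)}$. *)

theory Defs
  imports Main "HOL-Combinatorics.Permutations"
begin

text \<open>Partitions are represented as lists of naturals (lam!0 = lambda_1, ...).
  epsilon is an integer assumed to be 1 or -1.\<close>

definition in_P :: "int \<Rightarrow> nat \<Rightarrow> nat list \<Rightarrow> bool" where
  "in_P eps N lam \<longleftrightarrow> sorted_wrt (\<ge>) lam \<and> (\<forall>m\<in>set lam. m \<ge> 1) \<and> sum_list lam = N \<and>
     (\<forall>m\<in>set lam. eps * (-1) ^ m = 1 \<longrightarrow> even (count_list lam m))"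

definition part :: "nat list \<Rightarrow> nat \<Rightarrow> nat" where
  "part lam i = (if i = 0 then 0 else if i \<le> length lam then lam ! (i - 1) else 0)"

definition two_step :: "int \<Rightarrow> nat list \<Rightarrow> nat \<Rightarrow> bool" where
  "two_step eps lam i \<longleftrightarrow> 1 \<le> i \<and> i < length lam \<and>
     eps * (-1) ^ part lam i = -1 \<and> eps * (-1) ^ part lam (i + 1) = -1 \<and>
     part lam (i - 1) \<noteq> part lam i \<and> part lam (i + 1) \<noteq> part lam (i + 2)"

definition case1 :: "nat list \<Rightarrow> nat \<Rightarrow> bool" where
  "case1 lam i \<longleftrightarrow> 1 \<le> i \<and> i \<le> length lam \<and> part lam i \<ge> part lam (i + 1) + 2"

definition case2 :: "int \<Rightarrow> nat list \<Rightarrow> nat \<Rightarrow> bool" where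
  "case2 eps lam i \<longleftrightarrow> 1 \<le> i \<and> i \<le> length lam \<and> two_step eps lam i \<and> part lam i = part lam (i + 1)"

text \<open>lambda^(i); index j below is 0-based, i.e. the part lambda_(j+1).\<close>
definition ks_step :: "int \<Rightarrow> nat list \<Rightarrow> nat \<Rightarrow> nat list" where
  "ks_step eps lam i =
     (if case1 lam i then
        filter (\<lambda>x. 0 < x) (map (\<lambda>j. if j < i then lam ! j - 2 else lam ! j) [0..<length lam])
      else if case2 eps lam i then
        filter (\<lambda>x. 0 < x) (map (\<lambda>j. if j + 1 < i then lam ! j - 2
                                      else if j < i + 1 then lam ! j - 1 else lam ! j) [0..<length lam])
      else lam)"

fun admissible :: "int \<Rightarrow> nat list \<Rightarrow> nat list \<Rightarrow> bool" where
  "admissible eps lam [] = True"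
| "admissible eps lam (i # is) =
     ((case1 lam i \<or> case2 eps lam i) \<and> admissible eps (ks_step eps lam i) is)"

end

theory Submission
  imports Defs "HOL-Combinatorics.Permutations"
begin


definition C1 :: "(nat \<Rightarrow> nat) \<Rightarrow> nat \<Rightarrow> bool" where
 "C1 p i \<longleftrightarrow> 1 \<le> i \<and> p i \<ge> p (i+1) + 2"
definition C2 :: "bool \<Rightarrow> (nat \<Rightarrow> nat) \<Rightarrow> nat \<Rightarrow> bool" where
 "C2 b p i \<longleftrightarrow> 1 \<le> i \<and> 1 \<le> p (i+1) \<and> (b = odd (p i)) \<and> (b = odd (p (i+1))) \<and>
    p (i-1) \<noteq> p i \<and> p (i+1) \<noteq> p (i+2) \<and> p i = p (i+1)"
definition S1 :: "(nat \<Rightarrow> nat) \<Rightarrow> nat \<Rightarrow> nat \<Rightarrow> nat" where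
 "S1 p i = (\<lambda>k. if k \<le> i then p k - 2 else p k)"
definition S2 :: "(nat \<Rightarrow> nat) \<Rightarrow> nat \<Rightarrow> nat \<Rightarrow> nat" where
 "S2 p i = (\<lambda>k. if k < i then p k - 2 else if k \<le> i + 1 then p k - 1 else p k)"

definition anti :: "(nat \<Rightarrow> nat) \<Rightarrow> bool" where
 "anti p \<longleftrightarrow> p 0 = 0 \<and> (\<forall>x y. 1 \<le> x \<longrightarrow> x \<le> y \<longrightarrow> p y \<le> p x)"

lemma antiD: "anti p \<Longrightarrow> 1 \<le> x \<Longrightarrow> x \<le> y \<Longrightarrow> p y \<le> p x"
  unfolding anti_def by blast

lemma odd2: "2 \<le> (m::nat) \<Longrightarrow> odd (m - 2) = odd m" by presburger
lemma odd1: "1 \<le> (m::nat) \<Longrightarrow> odd (m - 1) = (\<not> odd m)" by presburger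

lemma AA:
  assumes a: "anti p" and "i \<noteq> j" and "C1 p i" and "C1 (S1 p i) j"
  shows "C1 p j \<and> C1 (S1 p j) i"
proof (cases "j < i")
  case True
  have "p i \<le> p (j+1)" using antiD[OF a, of "j+1" i] True by simp
  then show ?thesis using assms True unfolding C1_def S1_def by auto
next
  case False
  have "p j \<le> p (i+1)" using antiD[OF a, of "i+1" j] False assms(2) by simp
  then show ?thesis using assms False unfolding C1_def S1_def by auto
qed

lemma AB:
  assumes a: "anti p" and "i \<noteq> j" and "C1 p i" and "C2 b (S1 p i) j"
  shows "C2 b p j \<and> C1 (S2 p j) i"
proof -
  have p0: "p 0 = 0" using a by (simp add: anti_def)
  have j1: "j \<ge> 1" using assms(4) by (simp add: C2_def)
  consider "j+2 \<le> i" | "i = j+1" | "j = i+1" | "j \<ge> i+2" using assms(2) by linarith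
  then show ?thesis
  proof cases
    case 1
    have "p i \<le> p (j+2)" "p i \<le> p (j+1)" "p i \<le> p j" using antiD[OF a, of "j+2" i] antiD[OF a, of "j+1" i] antiD[OF a, of j i] 1 j1 by auto
    moreover have "j \<ge> 2 \<Longrightarrow> p i \<le> p (j - 1)" using antiD[OF a, of "j-1" i] 1 by simp
    ultimately show ?thesis using assms 1 p0 unfolding C1_def C2_def S1_def S2_def
      by (auto simp: odd2 split: if_splits)
  next
    case 2
    have "p i \<le> p j" using antiD[OF a, of j i] 2 j1 by auto
    moreover have "j \<ge> 2 \<Longrightarrow> p i \<le> p (j - 1)" using antiD[OF a, of "j-1" i] 2 by simp
    ultimately show ?thesis using assms 2 p0 unfolding C1_def C2_def S1_def S2_def
      by (auto simp: odd2 split: if_splits)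
  next
    case 3
    have "p (j+1) \<le> p j" "p j \<le> p (j - 1)" using antiD[OF a, of j "j+1"] antiD[OF a, of "j-1" j] 3 assms(3) by (auto simp: C1_def)
    moreover have "p (j+2) \<le> p (j+1)" using antiD[OF a, of "j+1" "j+2"] by simp
    ultimately show ?thesis using assms 3 unfolding C1_def C2_def S1_def S2_def
      by (auto simp: odd2 split: if_splits)
  next
    case 4
    have "p (j-1) \<le> p (i+1)" using antiD[OF a, of "i+1" "j-1"] 4 by simp
    moreover have "p (j+1) \<le> p j" "p j \<le> p (j - 1)" using antiD[OF a, of j "j+1"] antiD[OF a, of "j-1" j] 4 assms(2,4) by (auto simp: C2_def)
    moreover have "p (j+2) \<le> p (j+1)" using antiD[OF a, of "j+1" "j+2"] by simp
    ultimately show ?thesis using assms 4 unfolding C1_def C2_def S1_def S2_def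
      by (auto simp: odd2 split: if_splits)
  qed
qed

lemma BA:
  assumes a: "anti p" and "i \<noteq> j" and "C2 b p i" and "C1 (S2 p i) j"
  shows "C1 p j \<and> C2 b (S1 p j) i"
proof -
  have p0: "p 0 = 0" using a by (simp add: anti_def)
  have i1: "i \<ge> 1" using assms(3) by (simp add: C2_def)
  have mi: "p (i+1) \<le> p i" "p (i+2) \<le> p (i+1)" "i \<ge> 2 \<Longrightarrow> p i \<le> p (i-1)" "p (i+3) \<le> p (i+2)"
    using antiD[OF a, of i "i+1"] antiD[OF a, of "i+1" "i+2"] antiD[OF a, of "i-1" i] antiD[OF a, of "i+2" "i+3"] i1 by auto

  have j1: "j \<ge> 1" using assms(4) by (simp add: C1_def C2_def)
  have mj: "p (j+1) \<le> p j" "p (j+2) \<le> p (j+1)" "j \<ge> 2 \<Longrightarrow> p j \<le> p (j-1)" "p (j+3) \<le> p (j+2)"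
    using antiD[OF a, of j "j+1"] antiD[OF a, of "j+1" "j+2"] antiD[OF a, of "j-1" j] antiD[OF a, of "j+2" "j+3"] j1 by auto

  consider "j+2 \<le> i" | "i = j+1" | "j = i+1" | "j \<ge> i+2" using assms(2) by linarith
  then show ?thesis
  proof cases
    case 1
    have "p (i-1) \<le> p (j+1)" using antiD[OF a, of "j+1" "i-1"] 1 by auto
    with 1 show ?thesis using assms mi mj p0 i1 j1 unfolding C1_def C2_def S1_def S2_def
      by (auto simp: odd2 split: if_splits)
  next
    case 2
    then show ?thesis using assms mi mj p0 i1 j1 unfolding C1_def C2_def S1_def S2_def
      by (auto simp: odd2 split: if_splits)
  next
    case 3
    then show ?thesis using assms mi mj p0 i1 j1 unfolding C1_def C2_def S1_def S2_def
      by (auto simp: odd2 split: if_splits)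
  next
    case 4
    have "p j \<le> p (i+2)" using antiD[OF a, of "i+2" j] 4 by auto
    with 4 show ?thesis using assms mi mj p0 i1 j1 unfolding C1_def C2_def S1_def S2_def
      by (auto simp: odd2 split: if_splits)
  qed
qed



lemma odd2': "odd ((m::nat) - 2) \<longleftrightarrow> 2 \<le> m \<and> odd m" by presburger
lemma odd1': "odd ((m::nat) - 1) \<longleftrightarrow> 1 \<le> m \<and> even m" by presburger
definition C2v :: "bool \<Rightarrow> nat \<Rightarrow> nat \<Rightarrow> nat \<Rightarrow> nat \<Rightarrow> nat \<Rightarrow> bool" where
 "C2v b i a0 a1 a2 a3 \<longleftrightarrow> 1 \<le> i \<and> 1 \<le> a2 \<and> (b = odd a1) \<and> (b = odd a2) \<and> a0 \<noteq> a1 \<and> a2 \<noteq> a3 \<and> a1 = a2"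
lemma C2_eq: "C2 b p i = C2v b i (p (i-1)) (p i) (p (i+1)) (p (i+2))"
  unfolding C2_def C2v_def by simp
lemma antiprev: "anti p \<Longrightarrow> p k \<le> p (k-1) \<or> p (k-1) = 0"
  unfolding anti_def by (cases "k \<le> 1") (auto simp: le_Suc_eq)

lemma L1: "C2v b j (a0-2) (a1-2) (a2-2) (a3-2) \<Longrightarrow> a3\<ge>2 \<Longrightarrow> a3 \<le> a2 \<Longrightarrow> a2 \<le> a1 \<Longrightarrow> (a0 \<ge> a1 \<or> a0 = 0) \<Longrightarrow> C2v b j a0 a1 a2 a3"
  unfolding C2v_def by (auto simp: odd2')
lemma L1': "C2v b j a0 a1 a2 a3 \<Longrightarrow> a3\<ge>2 \<Longrightarrow> a3 \<le> a2 \<Longrightarrow> a2 \<le> a1 \<Longrightarrow> (a0 \<ge> a1 \<or> a0 = 0) \<Longrightarrow> C2v b j (a0-2) (a1-2) (a2-2) (a3-2)"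
  unfolding C2v_def by (auto simp: odd2')
lemma L2: "C2v b j (a0-2) (a1-2) (a2-2) (a3-1) \<Longrightarrow> C2v b i a2 a3 a4 a5 \<Longrightarrow> a3\<le>a2 \<Longrightarrow> a2\<le>a1 \<Longrightarrow> (a1 \<le> a0 \<or> a0 = 0) \<Longrightarrow>
  C2v b j a0 a1 a2 a3 \<and> C2v b i (a2-1) a3 a4 a5"
  unfolding C2v_def by (auto simp: odd2')
lemma L5: "C2v b i a0 a1 a2 a3 \<Longrightarrow> C2v b j (a2-1) a3 a4 a5 \<Longrightarrow> (a1 \<le> a0 \<or> a0 = 0) \<Longrightarrow> a2 \<le> a1 \<Longrightarrow> a3 \<le> a2 \<Longrightarrow> a4 \<le> a3 \<Longrightarrow>
  C2v b j a2 a3 a4 a5 \<and> C2v b i (a0-2) (a1-2) (a2-2) (a3-1)"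
  unfolding C2v_def by (auto simp: odd2')

lemma BB:
  assumes a: "anti p" and "i \<noteq> j" and "C2 b p i" and "C2 b (S2 p i) j"
  shows "C2 b p j \<and> C2 b (S2 p j) i"
proof -
  have p0: "p 0 = 0" using a by (simp add: anti_def)
  have i1: "i \<ge> 1" using assms(3) by (simp add: C2_def)
  have j1: "j \<ge> 1" using assms(4) by (simp add: C2_def)
  have m: "\<And>x y. 1 \<le> x \<Longrightarrow> x \<le> y \<Longrightarrow> p y \<le> p x" using antiD[OF a] by blast
  note Pi = assms(3)[unfolded C2_eq]
  note Qj = assms(4)[unfolded C2_eq]
  consider "j+3 \<le> i" | "i = j+2" | "i = j+1" | "j = i+1" | "j = i+2" | "j \<ge> i+3" using assms(2) by linarith
  then show ?thesis
  proof cases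
    case 1
    have v: "S2 p i (j-1) = p (j-1) - 2" "S2 p i j = p j - 2" "S2 p i (j+1) = p (j+1) - 2" "S2 p i (j+2) = p (j+2) - 2"
      using 1 by (auto simp: S2_def)
    have w: "S2 p j (i-1) = p (i-1)" "S2 p j i = p i" "S2 p j (i+1) = p (i+1)" "S2 p j (i+2) = p (i+2)"
      using 1 by (auto simp: S2_def)
    have "p (i-1) \<le> p (j+2)" "p i \<le> p (i-1)" using m[of "j+2" "i-1"] m[of "i-1" i] 1 by auto
    moreover have "p i \<ge> 1" "p (i-1) \<noteq> p i" using Pi by (auto simp: C2v_def)
    ultimately have "p (j+2) \<ge> 2" by linarith
    moreover have "p (j+2) \<le> p (j+1)" "p (j+1) \<le> p j" using m[of "j+1" "j+2"] m[of j "j+1"] j1 by auto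
    ultimately have "C2v b j (p (j-1)) (p j) (p (j+1)) (p (j+2))"
      using L1[OF Qj[unfolded v]] antiprev[OF a, of j] by auto
    then show ?thesis unfolding C2_eq w using Pi by simp
  next
    case 2
    have v: "S2 p i (j-1) = p (j-1) - 2" "S2 p i j = p j - 2" "S2 p i (j+1) = p (j+1) - 2" "S2 p i (j+2) = p (j+2) - 1"
      using 2 by (auto simp: S2_def)
    have w: "S2 p j (i-1) = p (i-1) - 1" "S2 p j i = p i" "S2 p j (i+1) = p (i+1)" "S2 p j (i+2) = p (i+2)"
      using 2 by (auto simp: S2_def)
    have e: "i - 1 = j + 1" "i = j+2" using 2 by auto
    have Pi': "C2v b i (p (j+1)) (p (j+2)) (p (i+1)) (p (i+2))" using Pi 2 by simp
    have "p (j+2) \<le> p (j+1)" "p (j+1) \<le> p j" using m[of "j+1" "j+2"] m[of j "j+1"] j1 by auto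
    then have "C2v b j (p (j-1)) (p j) (p (j+1)) (p (j+2)) \<and> C2v b i (p (j+1) - 1) (p (j+2)) (p (i+1)) (p (i+2))"
      using L2[OF Qj[unfolded v] Pi'] antiprev[OF a, of j] by auto
    then show ?thesis unfolding C2_eq unfolding w by (simp add: e)
  next
    case 3
    have v: "S2 p i (j+1) = p (j+1) - 1" "S2 p i (j+2) = p (j+2) - 1"
      using 3 by (auto simp: S2_def)
    have "p (j+1) = p (j+2)" using Pi 3 by (auto simp: C2v_def)
    then show ?thesis using Qj unfolding v by (auto simp: C2v_def)
  next
    case 4
    have v: "S2 p i j = p j - 1" "S2 p i (j+1) = p (j+1)"
      using 4 by (auto simp: S2_def)
    have "b = odd (p j)" "p j \<ge> 1" using Pi 4 by (auto simp: C2v_def)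
    then show ?thesis using Qj unfolding v by (auto simp: C2v_def odd1')
  next
    case 5
    have e: "j - 1 = i + 1" "j = i+2" "j+1 = i+3" "j+2 = i+4" using 5 by auto
    have v: "S2 p i (j-1) = p (i+1) - 1" "S2 p i j = p j" "S2 p i (j+1) = p (j+1)" "S2 p i (j+2) = p (j+2)"
      using 5 by (auto simp: S2_def)
    have w: "S2 p j (i-1) = p (i-1) - 2" "S2 p j i = p i - 2" "S2 p j (i+1) = p (i+1) - 2" "S2 p j (i+2) = p (i+2) - 1"
      using 5 by (auto simp: S2_def)
    have Qj': "C2v b j (p (i+1) - 1) (p j) (p (j+1)) (p (j+2))" using Qj[unfolded v] .
    have "p (i+1) \<le> p i" "p j \<le> p (i+1)" "p (j+1) \<le> p j"
      using m[of i "i+1"] m[of "i+1" j] m[of j "j+1"] i1 5 by auto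
    then have "C2v b j (p (i+1)) (p j) (p (j+1)) (p (j+2)) \<and> C2v b i (p (i-1) - 2) (p i - 2) (p (i+1) - 2) (p j - 1)"
      using L5[OF Pi[unfolded e(2)[symmetric]] Qj'] antiprev[OF a, of i] by auto
    then show ?thesis unfolding C2_eq unfolding w using 5 by simp
  next
    case 6
    have v: "S2 p i (j-1) = p (j-1)" "S2 p i j = p j" "S2 p i (j+1) = p (j+1)" "S2 p i (j+2) = p (j+2)"
      using 6 by (auto simp: S2_def)
    have w: "S2 p j (i-1) = p (i-1) - 2" "S2 p j i = p i - 2" "S2 p j (i+1) = p (i+1) - 2" "S2 p j (i+2) = p (i+2) - 2"
      using 6 by (auto simp: S2_def)
    have "p (j-1) \<le> p (i+2)" "p j \<le> p (j-1)" using m[of "i+2" "j-1"] m[of "j-1" j] 6 by auto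
    moreover have "p j \<ge> 1" "p (j-1) \<noteq> p j" using Qj[unfolded v] by (auto simp: C2v_def)
    ultimately have "p (i+2) \<ge> 2" by linarith
    moreover have "p (i+2) \<le> p (i+1)" "p (i+1) \<le> p i" using m[of "i+1" "i+2"] m[of i "i+1"] i1 by auto
    ultimately have "C2v b i (p (i-1) - 2) (p i - 2) (p (i+1) - 2) (p (i+2) - 2)"
      using L1'[OF Pi] antiprev[OF a, of i] by auto
    then show ?thesis unfolding C2_eq w using Qj[unfolded v] by simp
  qed
qed

definition valid :: "nat list \<Rightarrow> bool" where
  "valid lam \<longleftrightarrow> sorted_wrt (\<ge>) lam \<and> (\<forall>m\<in>set lam. m \<ge> 1)"

lemma part_0[simp]: "part lam 0 = 0" by (simp add: part_def)

lemma valid_anti: "valid lam \<Longrightarrow> anti (part lam)"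
  unfolding anti_def valid_def
proof (intro conjI allI impI)
  fix x y :: nat assume v: "sorted_wrt (\<ge>) lam \<and> (\<forall>m\<in>set lam. 1 \<le> m)" and xy: "1 \<le> x" "x \<le> y"
  show "part lam y \<le> part lam x"
  proof (cases "y \<le> length lam")
    case True
    then have "lam ! (y-1) \<le> lam ! (x-1)"
      using v xy sorted_wrt_iff_nth_less[of "(\<ge>)" lam] by (cases "x = y") (auto dest: spec[of _ "x-1"])
    then show ?thesis using True xy by (simp add: part_def)
  next
    case False
    then show ?thesis by (simp add: part_def)
  qed
qed simp

lemma valid_part_pos: "valid lam \<Longrightarrow> 1 \<le> k \<Longrightarrow> k \<le> length lam \<Longrightarrow> part lam k \<ge> 1"
  unfolding valid_def part_def by (auto dest!: bspec[of _ _ "lam ! (k-1)"])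

lemma part_gt: "k > length lam \<Longrightarrow> part lam k = 0" by (simp add: part_def)

lemma case1_iff: "valid lam \<Longrightarrow> case1 lam i \<longleftrightarrow> C1 (part lam) i"
  unfolding case1_def C1_def
  by (cases "i \<le> length lam") (auto simp: part_gt)

lemma m1pow: "(-1::int) ^ m = (if even m then 1 else -1)"
  by (induction m) auto

lemma sgn_iff: "(eps::int) = 1 \<or> eps = -1 \<Longrightarrow> (eps * (-1) ^ m = -1) \<longleftrightarrow> ((eps = 1) = odd m)"
proof -
  assume e: "eps = 1 \<or> eps = -1"
  show ?thesis
  proof (cases "even m")
    case True
    then have "(-1::int) ^ m = 1" by (simp add: m1pow)
    then show ?thesis using e True by auto
  next
    case False
    then have "(-1::int) ^ m = -1" by (simp add: m1pow)
    then show ?thesis using e False by auto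
  qed
qed

lemma case2_iff: "(eps::int) = 1 \<or> eps = -1 \<Longrightarrow> valid lam \<Longrightarrow> case2 eps lam i \<longleftrightarrow> C2 (eps = 1) (part lam) i"
proof -
  assume e: "eps = 1 \<or> eps = -1" and v: "valid lam"
  have A: "i < length lam \<longleftrightarrow> 1 \<le> part lam (i+1)"
    using valid_part_pos[OF v, of "i+1"] part_gt[of lam "i+1"] by (cases "i < length lam") auto
  have B: "1 \<le> part lam (i+1) \<Longrightarrow> i \<le> length lam"
    using part_gt[of lam "i+1"] by (cases "i+1 \<le> length lam") auto
  show ?thesis unfolding case2_def two_step_def C2_def sgn_iff[OF e] A
    using B by auto
qed

lemma filter_sorted_zeros:
  "sorted_wrt (\<ge>) (L::nat list) \<Longrightarrow> \<exists>m. L = filter (\<lambda>x. 0 < x) L @ replicate m 0"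
proof (induction L)
  case Nil then show ?case by simp
next
  case (Cons x L)
  then obtain m where m: "L = filter (\<lambda>x. 0 < x) L @ replicate m 0" by auto
  show ?case
  proof (cases "x > 0")
    case True then show ?thesis using m by auto
  next
    case False
    then have "\<forall>y\<in>set L. y = 0" using Cons.prems by auto
    then have "filter (\<lambda>x. 0 < x) (x # L) = []" "x # L = replicate (Suc (length L)) 0" using False
      by (auto simp: filter_empty_conv intro: replicate_eqI)
    then show ?thesis by (metis append_Nil)
  qed
qed

lemma part_append_zeros: "part (xs @ replicate m 0) k = part xs k"
  unfolding part_def by (auto simp: nth_append)

lemma part_filter: "sorted_wrt (\<ge>) (L::nat list) \<Longrightarrow> part (filter (\<lambda>x. 0 < x) L) k = part L k"
  using filter_sorted_zeros[of L] part_append_zeros by metis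

lemma part_map: "part (map g [0..<n]) k = (if k = 0 then 0 else if k \<le> n then g (k-1) else 0)"
  unfolding part_def by auto

lemma anti_sorted: "anti q \<Longrightarrow> sorted_wrt (\<ge>) (map (\<lambda>j. q (j+1)) [0..<n])"
  unfolding sorted_wrt_iff_nth_less anti_def by auto

lemma anti_S1: "anti p \<Longrightarrow> C1 p i \<Longrightarrow> anti (S1 p i)"
proof -
  assume a: "anti p" and c: "C1 p i"
  have m: "\<And>x y. 1 \<le> x \<Longrightarrow> x \<le> y \<Longrightarrow> p y \<le> p x" using antiD[OF a] by blast
  have p0: "p 0 = 0" using a by (simp add: anti_def)
  have r: "S1 p i y \<le> S1 p i x" if xy: "1 \<le> x" "x \<le> y" for x y
  proof (cases "y \<le> i")
    case True then show ?thesis using m[OF xy] xy by (simp add: S1_def)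
  next
    case False
    show ?thesis
    proof (cases "x \<le> i")
      case True
      have "p y \<le> p (i+1)" "p i \<le> p x" using m[of "i+1" y] m[of x i] False True xy by auto
      then have "p y + 2 \<le> p x" using c by (simp add: C1_def)
      then show ?thesis using True False by (simp add: S1_def)
    next
      case F2: False then show ?thesis using m[OF xy] False by (simp add: S1_def)
    qed
  qed
  show ?thesis unfolding anti_def using r p0 by (simp add: S1_def)
qed

lemma anti_S2: "anti p \<Longrightarrow> C2 b p i \<Longrightarrow> anti (S2 p i)"
proof -
  assume a: "anti p" and c: "C2 b p i"
  have m: "\<And>x y. 1 \<le> x \<Longrightarrow> x \<le> y \<Longrightarrow> p y \<le> p x" using antiD[OF a] by blast
  have p0: "p 0 = 0" using a by (simp add: anti_def)
  have c': "1 \<le> i" "1 \<le> p (i+1)" "p (i-1) \<noteq> p i" "p (i+1) \<noteq> p (i+2)" "p i = p (i+1)" using c by (auto simp: C2_def)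
  have r: "S2 p i y \<le> S2 p i x" if xy: "1 \<le> x" "x \<le> y" for x y
  proof -
    have base: "p y \<le> p x" using m[OF xy] .
    consider "y < i" | "x < i" "i \<le> y" "y \<le> i+1" | "x < i" "y > i+1" | "i \<le> x" "y \<le> i+1" | "i \<le> x" "x \<le> i+1" "y > i+1" | "x > i+1"
      using xy by linarith
    then show ?thesis
    proof cases
      case 1 then show ?thesis using base xy by (simp add: S2_def)
    next
      case 2
      have "p (i-1) \<le> p x" "p i \<le> p (i-1)" "p y \<le> p i" using m[of x "i-1"] m[of "i-1" i] m[of i y] 2 xy by auto
      then show ?thesis using 2 c' by (simp add: S2_def)
    next
      case 3
      have "p (i-1) \<le> p x" "p i \<le> p (i-1)" "p y \<le> p (i+2)" "p (i+2) \<le> p (i+1)"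
        using m[of x "i-1"] m[of "i-1" i] m[of "i+2" y] m[of "i+1" "i+2"] 3 xy by auto
      then show ?thesis using 3 c' by (simp add: S2_def)
    next
      case 4 then show ?thesis using base xy by (simp add: S2_def)
    next
      case 5
      have "p x \<ge> p (i+1)" "p y \<le> p (i+2)" "p (i+2) \<le> p (i+1)"
        using m[of x "i+1"] m[of "i+2" y] m[of "i+1" "i+2"] 5 xy by auto
      then show ?thesis using 5 c' by (simp add: S2_def)
    next
      case 6 then show ?thesis using base xy by (simp add: S2_def)
    qed
  qed
  show ?thesis unfolding anti_def using r p0 by (simp add: S2_def)
qed

lemma ks1: assumes v: "valid lam" and c: "case1 lam i"
  shows "valid (ks_step eps lam i) \<and> part (ks_step eps lam i) = S1 (part lam) i"
proof -
  let ?p = "part lam"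
  have C: "C1 ?p i" using case1_iff[OF v] c by simp
  have an: "anti (S1 ?p i)" using anti_S1[OF valid_anti[OF v] C] .
  define L where "L = map (\<lambda>j. if j < i then lam ! j - 2 else lam ! j) [0..<length lam]"
  have L: "L = map (\<lambda>j. S1 ?p i (j+1)) [0..<length lam]"
    unfolding L_def S1_def part_def by auto
  have ks: "ks_step eps lam i = filter (\<lambda>x. 0 < x) L" using c by (simp add: ks_step_def L_def)
  have so: "sorted_wrt (\<ge>) L" unfolding L using anti_sorted[OF an] .
  have "part (ks_step eps lam i) k = S1 ?p i k" for k
  proof -
    have "part (ks_step eps lam i) k = part L k" unfolding ks using part_filter[OF so] .
    also have "\<dots> = S1 ?p i k" unfolding L part_map
      by (auto simp: S1_def part_gt)
    finally show ?thesis .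
  qed
  moreover have "valid (ks_step eps lam i)" unfolding ks valid_def using so
    by (auto intro: sorted_wrt_filter)
  ultimately show ?thesis by auto
qed

lemma ks2: assumes e: "(eps::int) = 1 \<or> eps = -1" and v: "valid lam" and c: "case2 eps lam i" and nc: "\<not> case1 lam i"
  shows "valid (ks_step eps lam i) \<and> part (ks_step eps lam i) = S2 (part lam) i"
proof -
  let ?p = "part lam"
  have C: "C2 (eps = 1) ?p i" using case2_iff[OF e v] c by simp
  have an: "anti (S2 ?p i)" using anti_S2[OF valid_anti[OF v] C] .
  define L where "L = map (\<lambda>j. if j + 1 < i then lam ! j - 2
                                      else if j < i + 1 then lam ! j - 1 else lam ! j) [0..<length lam]"
  have L: "L = map (\<lambda>j. S2 ?p i (j+1)) [0..<length lam]"
    unfolding L_def S2_def part_def by auto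
  have ks: "ks_step eps lam i = filter (\<lambda>x. 0 < x) L" using c nc by (simp add: ks_step_def L_def)
  have so: "sorted_wrt (\<ge>) L" unfolding L using anti_sorted[OF an] .
  have "part (ks_step eps lam i) k = S2 ?p i k" for k
  proof -
    have "part (ks_step eps lam i) k = part L k" unfolding ks using part_filter[OF so] .
    also have "\<dots> = S2 ?p i k" unfolding L part_map
      by (auto simp: S2_def part_gt)
    finally show ?thesis .
  qed
  moreover have "valid (ks_step eps lam i)" unfolding ks valid_def using so
    by (auto intro: sorted_wrt_filter)
  ultimately show ?thesis by auto
qed

lemma part_inj: assumes "valid l1" "valid l2" "part l1 = part l2" shows "l1 = l2"
proof -
  have len: "length l1 = length l2"
  proof (rule ccontr)
    assume ne: "length l1 \<noteq> length l2"
    show False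
    proof (cases "length l1 < length l2")
      case True
      then have "part l2 (length l2) \<ge> 1" using valid_part_pos[OF assms(2)] by simp
      moreover have "part l1 (length l2) = 0" using True part_gt by blast
      ultimately show False using assms(3) by simp
    next
      case False
      then have "length l2 < length l1" using ne by simp
      then have "part l1 (length l1) \<ge> 1" using valid_part_pos[OF assms(1)] by simp
      moreover have "part l2 (length l1) = 0" using \<open>length l2 < length l1\<close> part_gt by blast
      ultimately show False using assms(3) by simp
    qed
  qed
  show ?thesis
  proof (rule nth_equalityI[OF len])
    fix k assume "k < length l1"
    then have "part l1 (k+1) = l1 ! k" "part l2 (k+1) = l2 ! k" using len by (auto simp: part_def)
    then show "l1 ! k = l2 ! k" using assms(3) by metis
  qed
qed

lemma C1_not_C2: "C1 p i \<Longrightarrow> \<not> C2 b p i" unfolding C1_def C2_def by auto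

lemma ks_part: assumes e: "(eps::int) = 1 \<or> eps = -1" and v: "valid lam" and c: "case1 lam i \<or> case2 eps lam i"
  shows "valid (ks_step eps lam i) \<and> part (ks_step eps lam i) =
     (if C1 (part lam) i then S1 (part lam) i else S2 (part lam) i)"
  using ks1[OF v, of i eps] ks2[OF e v, of i] c case1_iff[OF v, of i] by auto

lemma cx_iff: "(eps::int) = 1 \<or> eps = -1 \<Longrightarrow> valid lam \<Longrightarrow>
  (case1 lam i \<or> case2 eps lam i) \<longleftrightarrow> (C1 (part lam) i \<or> C2 (eps = 1) (part lam) i)"
  using case1_iff case2_iff by blast

lemma com11: "S1 (S1 p i) j = S1 (S1 p j) i" by (auto simp: fun_eq_iff S1_def)
lemma com21: "S2 (S1 p i) j = S1 (S2 p j) i" by (auto simp: fun_eq_iff S1_def S2_def)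
lemma com22: "S2 (S2 p i) j = S2 (S2 p j) i" by (auto simp: fun_eq_iff S2_def)

lemma swap_list:
  assumes e: "(eps::int) = 1 \<or> eps = -1" and v: "valid lam" and ij: "i \<noteq> j"
    and ci: "case1 lam i \<or> case2 eps lam i"
    and cj: "case1 (ks_step eps lam i) j \<or> case2 eps (ks_step eps lam i) j"
  shows "(case1 lam j \<or> case2 eps lam j) \<and>
         (case1 (ks_step eps lam j) i \<or> case2 eps (ks_step eps lam j) i) \<and>
         ks_step eps (ks_step eps lam i) j = ks_step eps (ks_step eps lam j) i"
proof -
  define p where "p = part lam"
  define b where "b = (eps = 1)"
  have a: "anti p" using valid_anti[OF v] p_def by simp
  obtain vi: "valid (ks_step eps lam i)" and pi: "part (ks_step eps lam i) = (if C1 p i then S1 p i else S2 p i)"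
    using ks_part[OF e v ci] p_def by auto
  have Ci: "C1 p i \<or> C2 b p i" using cx_iff[OF e v] ci p_def b_def by auto
  have Cj': "C1 (part (ks_step eps lam i)) j \<or> C2 b (part (ks_step eps lam i)) j"
    using cx_iff[OF e vi] cj b_def by auto
  have main: "(C1 p j \<or> C2 b p j) \<and>
     (C1 (if C1 p j then S1 p j else S2 p j) i \<or> C2 b (if C1 p j then S1 p j else S2 p j) i) \<and>
     (let q = (if C1 p i then S1 p i else S2 p i) in if C1 q j then S1 q j else S2 q j) =
     (let q = (if C1 p j then S1 p j else S2 p j) in if C1 q i then S1 q i else S2 q i)"
  proof (cases "C1 p i")
    case True
    note Cj = Cj'[unfolded pi, simplified True if_True]
    show ?thesis
    proof (cases "C1 (S1 p i) j")
      case True2: True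
      have "C1 p j \<and> C1 (S1 p j) i" using AA[OF a ij True True2] .
      then show ?thesis using True True2 com11[of p i j] by simp
    next
      case False
      then have "C2 b (S1 p i) j" using Cj by simp
      then have "C2 b p j \<and> C1 (S2 p j) i" using AB[OF a ij True] by simp
      then show ?thesis using True False C1_not_C2[of p j b] com21[of p i j] by auto
    qed
  next
    case False
    then have C2i: "C2 b p i" using Ci by simp
    note Cj = Cj'[unfolded pi, simplified False if_False]
    show ?thesis
    proof (cases "C1 (S2 p i) j")
      case True2: True
      have "C1 p j \<and> C2 b (S1 p j) i" using BA[OF a ij C2i True2] .
      then show ?thesis using False True2 C1_not_C2[of "S1 p j" i b] com21[of p j i] by (auto simp: Let_def)
    next
      case F2: False
      then have "C2 b (S2 p i) j" using Cj by simp
      then have "C2 b p j \<and> C2 b (S2 p j) i" using BB[OF a ij C2i] by simp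
      then show ?thesis using False F2 C1_not_C2[of p j b] C1_not_C2[of "S2 p j" i b] com22[of p i j] by (auto simp: Let_def)
    qed
  qed
  have cjl: "case1 lam j \<or> case2 eps lam j" using cx_iff[OF e v] main p_def b_def by auto
  obtain vj: "valid (ks_step eps lam j)" and pj: "part (ks_step eps lam j) = (if C1 p j then S1 p j else S2 p j)"
    using ks_part[OF e v cjl] p_def by auto
  have cil: "case1 (ks_step eps lam j) i \<or> case2 eps (ks_step eps lam j) i"
    using cx_iff[OF e vj] main pj b_def by auto
  obtain vij: "valid (ks_step eps (ks_step eps lam i) j)"
    and pij: "part (ks_step eps (ks_step eps lam i) j) = (let q = part (ks_step eps lam i) in if C1 q j then S1 q j else S2 q j)"
    using ks_part[OF e vi cj] by auto
  obtain vji: "valid (ks_step eps (ks_step eps lam j) i)"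
    and pji: "part (ks_step eps (ks_step eps lam j) i) = (let q = part (ks_step eps lam j) in if C1 q i then S1 q i else S2 q i)"
    using ks_part[OF e vj cil] by auto
  have "ks_step eps (ks_step eps lam i) j = ks_step eps (ks_step eps lam j) i"
    by (rule part_inj[OF vij vji]) (simp only: pij pji pi pj main)
  then show ?thesis using cjl cil by blast
qed

lemma valid_step: "(eps::int) = 1 \<or> eps = -1 \<Longrightarrow> valid lam \<Longrightarrow> case1 lam i \<or> case2 eps lam i \<Longrightarrow> valid (ks_step eps lam i)"
  using ks_part by blast

lemma adm_swap:
  assumes e: "(eps::int) = 1 \<or> eps = -1"
  shows "valid lam \<Longrightarrow> admissible eps lam (xs @ i # j # ys) \<Longrightarrow> admissible eps lam (xs @ j # i # ys)"
proof (induction xs arbitrary: lam)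
  case Nil
  show ?case
  proof (cases "i = j")
    case True then show ?thesis using Nil by simp
  next
    case False
    have ci: "case1 lam i \<or> case2 eps lam i" and cj: "case1 (ks_step eps lam i) j \<or> case2 eps (ks_step eps lam i) j"
      and r: "admissible eps (ks_step eps (ks_step eps lam i) j) ys" using Nil.prems by auto
    from swap_list[OF e Nil.prems(1) False ci cj] r show ?thesis by simp
  qed
next
  case (Cons x xs)
  then show ?case using valid_step[OF e] by auto
qed

lemma adm_front:
  assumes e: "(eps::int) = 1 \<or> eps = -1"
  shows "valid lam \<Longrightarrow> admissible eps lam (as @ y # bs) \<Longrightarrow> admissible eps lam (y # as @ bs)"
proof (induction as arbitrary: bs rule: rev_induct)
  case Nil then show ?case by simp
next
  case (snoc a as)
  have "admissible eps lam (as @ y # a # bs)"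
    using adm_swap[OF e snoc.prems(1), of as a y bs] snoc.prems(2) by simp
  then have "admissible eps lam (y # as @ a # bs)" using snoc.IH[OF snoc.prems(1)] by blast
  then show ?case by simp
qed

lemma adm_perm:
  assumes e: "(eps::int) = 1 \<or> eps = -1"
  shows "valid lam \<Longrightarrow> admissible eps lam xs \<Longrightarrow> mset ys = mset xs \<Longrightarrow> admissible eps lam ys"
proof (induction ys arbitrary: xs lam)
  case Nil then show ?case by simp
next
  case (Cons y ys)
  have "y \<in> set xs" using Cons.prems(3) by (metis list.set_intros(1) set_mset_mset)
  then obtain as bs where xs: "xs = as @ y # bs" by (meson split_list)
  have "admissible eps lam (y # as @ bs)" using adm_front[OF e Cons.prems(1)] Cons.prems(2) xs by simp
  then have c: "case1 lam y \<or> case2 eps lam y" and r: "admissible eps (ks_step eps lam y) (as @ bs)" by auto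
  have "mset ys = mset (as @ bs)" using Cons.prems(3) xs by simp
  then have "admissible eps (ks_step eps lam y) ys"
    using Cons.IH[OF valid_step[OF e Cons.prems(1) c] r] by blast
  then show ?case using c by simp
qed

theorem mainTheorem12:
  fixes eps :: int and N :: nat and lam :: "nat list" and "is" :: "nat list"
  assumes "eps = 1 \<or> eps = -1"
    and "in_P eps N lam"
    and "admissible eps lam is"
    and "eps = 1 \<longrightarrow> int N - 2 * int (sum_list is) \<noteq> 2"
  shows "\<forall>\<sigma>. \<sigma> permutes {0..<length is} \<longrightarrow>
           admissible eps lam (map (\<lambda>k. is ! \<sigma> k) [0..<length is])"
proof (intro allI impI)
  fix \<sigma> assume s: "\<sigma> permutes {0..<length is}"
  have v: "valid lam" using assms(2) unfolding in_P_def valid_def by auto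
  have s': "\<sigma> permutes {..<length is}" using s by (simp add: atLeast0LessThan)
  have "mset (map (\<lambda>k. is ! \<sigma> k) [0..<length is]) = mset is"
    using mset_permute_list[OF s'] by (simp add: permute_list_def)
  then show "admissible eps lam (map (\<lambda>k. is ! \<sigma> k) [0..<length is])"
    using adm_perm[OF assms(1) v assms(3)] by blast
qed

end
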